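(* Let $f_1^0, f_2^0, g_2^0, x^0\in\mathbb{R}$ with $\Delta := f_1^0-f_2^0>0$ and let $N\ge1$ be an integer. Let $\mu_1,L_1,\mu_2,L_2$ satisfy $0\le\mu_1<L_2\le L_1<\infty$, $\mu_2<L_2$, $\mu_2<L_1$, and either $\mu_2\ge0$, or $\mu_1>-\mu_2>0$ and $E:=\frac{L_2+\mu_2}{L_1L_2}\cdot\frac{L_2-L_1}{-\mu_2}+\mu_1^{-1}-L_1^{-1}\le0$. Let $p_1 := L_2^{-1}\frac{L_2-\mu_1}{L_1-\mu_1}+L_2^{-1}\big(1+\frac{L_2^{-1}-L_1^{-1}}{\mu_1^{-1}-L_1^{-1}}\big)$ (with $1/0$ interpreted as $\infty$ when $\mu_1=0$) and $U := -\sqrt{\frac{2\Delta}{p_1N}}$. Define, for $k=0,\dots,N$: $x^k = x^0-k\frac{U}{L_2}$, $g_1^k = g_2^0-(k-1)U$, $f_1^k = f_2(x^k)+\frac{N-k}{N}\Delta$, and for $k=0,\dots,N-1$: $\bar x^k = x^k-\frac{L_2-\mu_1}{L_1-\mu_1}\frac{U}{L_2}$. Define $f_2,f_1:\mathbb{R}\to\mathbb{R}$ by $f_2(x)=\frac12L_2(x-x^0)^2+g_2^0(x-x^0)+f_2^0$ and $f_1(x)=\frac12L_1(x-x^0)^2+g_1^0(x-x^0)+f_1^0$ for $x\le x^0$; $f_1(x)=\frac12L_1(x-x^k)^2+g_1^k(x-x^k)+f_1^k$ for $x\in[x^k,\bar x^k]$; $f_1(x)=\frac12\mu_1(x-x^{k+1})^2+g_1^{k+1}(x-x^{k+1})+f_1^{k+1}$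 for $x\in[\bar x^k,x^{k+1}]$ ($k=0,\dots,N-1$); $f_1(x)=\frac12L_1(x-x^N)^2+g_1^N(x-x^N)+f_1^N$ for $x\ge x^N$. Then $f_1\in\mathcal{F}_{\mu_1,L_1}$, $f_2\in\mathcal{F}_{\mu_2,L_2}$, and performing $N$ iterations of DCA ($x^{k+1}$ such that $\nabla f_1(x^{k+1})=\nabla f_2(x^k)$) on $F=f_1-f_2$ starting from $x^0$ produces the points $x^0,\dots,x^N$ and $$\tfrac12\min_{0\le k\le N}|\nabla f_1(x^k)-\nabla f_2(x^k)|^2=\frac{\Delta}{p_1N}.$$
   Context: For $\mu\in\mathbb{R}$ and $L\in(\mu,\infty]$, $\mathcal{F}_{\mu,L}$ is the class of proper lower semicontinuous functions $f$ with $f-\frac{\mu}{2}|\cdot|^2$ convex and $\frac{L}{2}|\cdot|^2-f$ convex (when $L<\infty$). A DCA iteration from $x$ on $F=f_1-f_2$ selects $g_2\in\partial f_2(x)$ and $x^+\in\operatorname{argmin}_w\{f_1(w)-g_2w\}$. *)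

theory Defs
  imports "HOL-Analysis.Analysis"
begin

definition lsc_real :: "(real \<Rightarrow> real) \<Rightarrow> bool" where
  "lsc_real f \<longleftrightarrow> (\<forall>a. closed {y. f y \<le> a})"

(* The class F_{mu,L} for finite L, for real-valued (hence proper) functions on R. *)
definition FmuL :: "real \<Rightarrow> real \<Rightarrow> (real \<Rightarrow> real) \<Rightarrow> bool" where
  "FmuL \<mu> L f \<longleftrightarrow> lsc_real f
     \<and> convex_on UNIV (\<lambda>x. f x - \<mu> / 2 * x\<^sup>2)
     \<and> convex_on UNIV (\<lambda>x. L / 2 * x\<^sup>2 - f x)"

(* One DCA iteration from x on F = f1 - f2 may produce x':
   select g2 in the (here: differentiable) subdifferential of f2 at x, i.e. the gradient,
   and x' is a minimiser of w \<mapsto> f1 w - g2 * w. *)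
definition dca_step :: "(real \<Rightarrow> real) \<Rightarrow> (real \<Rightarrow> real) \<Rightarrow> real \<Rightarrow> real \<Rightarrow> bool" where
  "dca_step f1 f2 x x' \<longleftrightarrow>
     (\<exists>g2. (f2 has_real_derivative g2) (at x) \<and> (\<forall>w. f1 x' - g2 * x' \<le> f1 w - g2 * w))"

(* p_1, with 1/0 read as +infinity when mu1 = 0 (then the fraction term vanishes). *)
definition p1_const :: "real \<Rightarrow> real \<Rightarrow> real \<Rightarrow> real" where
  "p1_const \<mu>1 L1 L2 =
     (if \<mu>1 = 0 then inverse L2 * ((L2 - \<mu>1) / (L1 - \<mu>1)) + inverse L2
      else inverse L2 * ((L2 - \<mu>1) / (L1 - \<mu>1))
           + inverse L2 * (1 + (inverse L2 - inverse L1) / (inverse \<mu>1 - inverse L1)))"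

end

theory Submission
  imports Defs
begin
lemma deriv_glue:
  fixes f :: "real \<Rightarrow> real"
  assumes "(f has_real_derivative q) (at y within {..y})"
    and "(f has_real_derivative q) (at y within {y..})"
  shows "(f has_real_derivative q) (at y)"
proof -
  have U: "{..y} \<union> {y..} = UNIV" by auto
  have "((\<lambda>z. (f z - f y) / (z - y)) \<longlongrightarrow> q) (at y within {..y} \<union> {y..})"
    using assms unfolding has_field_derivative_iff Lim_within_Un by simp
  then show ?thesis unfolding U has_field_derivative_iff .
qed

lemma right_piece:
  fixes f Q :: "real \<Rightarrow> real"
  assumes "c \<le> y" "y < d" "\<forall>z\<in>{c..d}. f z = Q z" "(Q has_real_derivative q) (at y)"
  shows "(f has_real_derivative q) (at y within {y..})"
proof (rule has_field_derivative_transform_within[where d="d - y" and f=Q])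
  show "(Q has_real_derivative q) (at y within {y..})"
    using assms(4) by (rule has_field_derivative_at_within)
  fix z assume "z \<in> {y..}" "dist z y < d - y"
  then show "Q z = f z" using assms(1,3) by (auto simp: dist_real_def)
qed (use assms in auto)

lemma left_piece:
  fixes f Q :: "real \<Rightarrow> real"
  assumes "c < y" "y \<le> d" "\<forall>z\<in>{c..d}. f z = Q z" "(Q has_real_derivative q) (at y)"
  shows "(f has_real_derivative q) (at y within {..y})"
proof (rule has_field_derivative_transform_within[where d="y - c" and f=Q])
  show "(Q has_real_derivative q) (at y within {..y})"
    using assms(4) by (rule has_field_derivative_at_within)
  fix z assume "z \<in> {..y}" "dist z y < y - c"
  then show "Q z = f z" using assms(2,3) by (auto simp: dist_real_def)
qed (use assms in auto)

lemma quadD: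
  fixes a p b c z :: real
  shows "((\<lambda>z. 1/2*a*(z-p)\<^sup>2 + b*(z-p) + c) has_real_derivative (a*(z-p)+b)) (at z)"
  by (auto intro!: derivative_eq_intros simp: power2_eq_square algebra_simps)

lemma mono_glue:
  fixes F :: "real \<Rightarrow> real"
  assumes "mono_on A F" "mono_on B F" "m \<in> A" "m \<in> B" "\<forall>a\<in>A. a \<le> m" "\<forall>b\<in>B. m \<le> b"
  shows "mono_on (A \<union> B) F"
  unfolding mono_on_def
proof (intro allI impI)
  fix u v assume h: "u \<in> A \<union> B \<and> v \<in> A \<union> B \<and> u \<le> v"
  show "F u \<le> F v"
  proof (cases "u \<in> A")
    case True
    show ?thesis
    proof (cases "v \<in> A")
      case True then show ?thesis using \<open>u \<in> A\<close> h assms(1) by (auto simp: mono_on_def)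
    next
      case False
      then have "v \<in> B" using h by auto
      have "F u \<le> F m" using assms(1,3,5) \<open>u\<in>A\<close> by (auto simp: mono_on_def)
      also have "\<dots> \<le> F v" using assms(2,4,6) \<open>v\<in>B\<close> by (auto simp: mono_on_def)
      finally show ?thesis .
    qed
  next
    case False
    then have "u \<in> B" using h by auto
    show ?thesis
    proof (cases "v \<in> B")
      case True then show ?thesis using \<open>u \<in> B\<close> h assms(2) by (auto simp: mono_on_def)
    next
      case False
      then have "v \<in> A" using h by auto
      then have "u = v" using \<open>u\<in>B\<close> h assms(5,6) by force
      then show ?thesis by simp
    qed
  qed
qed

lemma floor_idx:
  fixes h y x0 :: real and k :: nat
  assumes "h > 0" "x0 + real k * h \<le> y" "y < x0 + (real k + 1) * h"
  shows "nat \<lfloor>(y - x0) / h\<rfloor> = k"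
proof -
  have "real k \<le> (y - x0) / h" using assms by (simp add: field_simps)
  moreover have "(y - x0) / h < real k + 1" using assms by (simp add: field_simps)
  ultimately have "\<lfloor>(y - x0) / h\<rfloor> = int k" by (simp add: floor_eq_iff)
  then show ?thesis by simp
qed

lemma pw_pieces:
  fixes x xb :: "nat \<Rightarrow> real" and A B :: "nat \<Rightarrow> real \<Rightarrow> real" and F :: "real \<Rightarrow> real"
  assumes hh: "h > 0" and hr: "0 < r" "r \<le> 1" and hN: "N \<ge> 1"
    and xdef: "\<And>k. x k = x0 + real k * h" and xbdef: "\<And>k. xb k = x k + r * h"
    and mA: "\<And>k. A k (x k) = B k (x k)" and mB: "\<And>k. A k (xb k) = B (Suc k) (xb k)"
    and Fdef: "F = (\<lambda>y. if y \<le> x0 then A 0 y else if x N \<le> y then A N y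
          else (let k = nat \<lfloor>(y - x0) / h\<rfloor> in if y \<le> xb k then A k y else B (Suc k) y))"
  shows "\<forall>y. y \<le> x0 \<longrightarrow> F y = A 0 y"
    and "\<forall>y. x N \<le> y \<longrightarrow> F y = A N y"
    and "\<forall>k<N. \<forall>y\<in>{x k..xb k}. F y = A k y"
    and "\<forall>k<N. \<forall>y\<in>{xb k..x (Suc k)}. F y = B (Suc k) y"
proof -
  have xN: "x N > x0" using hN hh xdef[of N] by simp
  have x0: "x 0 = x0" using xdef[of 0] by simp
  have hrh: "r * h \<le> h" using mult_right_mono[of r 1 h] hr hh by simp
  show "\<forall>y. y \<le> x0 \<longrightarrow> F y = A 0 y" using Fdef by simp
  show "\<forall>y. x N \<le> y \<longrightarrow> F y = A N y" using Fdef xN by auto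
  show f4: "\<forall>k<N. \<forall>y\<in>{xb k..x (Suc k)}. F y = B (Suc k) y"
  proof (intro allI impI ballI)
    fix k y assume k: "k < N" and y: "y \<in> {xb k..x (Suc k)}"
    have ygt: "y > x0" using y xdef[of k] xbdef[of k] hh hr
      by (auto simp: algebra_simps) (smt (verit) mult_nonneg_nonneg of_nat_0_le_iff mult_pos_pos)
    have "real k + 1 \<le> real N" using k by simp
    then have "(real k + 1) * h \<le> real N * h" using hh by (simp add: mult_right_mono)
    then have xsN: "x (Suc k) \<le> x N" using xdef[of "Suc k"] xdef[of N] by (auto simp: algebra_simps)
    then have yN: "y \<le> x N" using y xdef[of "Suc k"] xdef[of N] by (auto simp: algebra_simps)
    show "F y = B (Suc k) y"
    proof (cases "y = x (Suc k)")
      case True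
      show ?thesis
      proof (cases "Suc k = N")
        case True
        then show ?thesis using \<open>y = x (Suc k)\<close> ygt Fdef mA[of N] by auto
      next
        case False
        then have k1: "Suc k < N" using k by simp
        then have "real (Suc k) + 1 \<le> real N" by simp
        then have "(real (Suc k) + 1) * h \<le> real N * h" using hh by (simp add: mult_right_mono)
        then have lt: "y < x0 + (real (Suc k) + 1) * h" "y < x N"
          using True xdef[of "Suc k"] xdef[of N] hh by (auto simp: algebra_simps)
        have fl: "nat \<lfloor>(y - x0) / h\<rfloor> = Suc k" using floor_idx[OF hh _ lt(1)] True xdef[of "Suc k"] by auto
        have "y \<le> xb (Suc k)" using True xbdef[of "Suc k"] hr hh by simp
        then show ?thesis using fl lt ygt Fdef mA[of "Suc k"] True by (auto simp: Let_def)
      qed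
    next
      case False
      then have lt: "y < x0 + (real k + 1) * h" "y < x N" using y xsN xdef[of "Suc k"] by (auto simp: algebra_simps)
      have "x k \<le> y" using y xbdef[of k] hr hh by (smt (verit) atLeastAtMost_iff mult_pos_pos)
      then have fl: "nat \<lfloor>(y - x0) / h\<rfloor> = k" using floor_idx[OF hh _ lt(1)] xdef[of k] by auto
      show ?thesis
      proof (cases "y = xb k")
        case True
        then show ?thesis using fl lt ygt Fdef mB[of k] by (auto simp: Let_def)
      next
        case False
        then have "\<not> y \<le> xb k" using y by auto
        then show ?thesis using fl lt ygt Fdef by (auto simp: Let_def)
      qed
    qed
  qed
  show "\<forall>k<N. \<forall>y\<in>{x k..xb k}. F y = A k y"
  proof (intro allI impI ballI)
    fix k y assume k: "k < N" and y: "y \<in> {x k..xb k}"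
    show "F y = A k y"
    proof (cases "y = x (Suc k)")
      case True
      then have "y = xb k" using y xbdef[of k] xdef[of k] xdef[of "Suc k"] hr hh
        by (auto simp: algebra_simps)
      then show ?thesis using f4 k y True mB[of k] by auto
    next
      case yne: False
      show ?thesis
    proof (cases "y \<le> x0")
      case True
      then have "real k * h \<le> 0" using y xdef[of k] by auto
      then have "k = 0" using hh by (simp add: mult_le_0_iff)
      then show ?thesis using True Fdef x0 y by auto
    next
      case False
      have "real k + 1 \<le> real N" using k by simp
      then have "(real k + 1) * h \<le> real N * h" using hh by (simp add: mult_right_mono)
      moreover have "y \<le> x0 + (real k + 1) * h" using y xdef[of k] xbdef[of k] hrh
        by (auto simp: algebra_simps)
      ultimately have lt: "y < x0 + (real k + 1) * h" "y < x N" using yne xdef[of "Suc k"] xdef[of N]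
        by (auto simp: algebra_simps)
      have "nat \<lfloor>(y - x0) / h\<rfloor> = k" using floor_idx[OF hh _ lt(1)] y xdef[of k] by auto
      then show ?thesis using False lt y Fdef by (auto simp: Let_def)
    qed
    qed
  qed
qed

lemma cover_right:
  fixes x xb :: "nat \<Rightarrow> real"
  assumes hh: "h > 0" and hr: "0 < r" "r \<le> 1" and hN: "N \<ge> 1"
    and xdef: "\<And>k. x k = x0 + real k * h" and xbdef: "\<And>k. xb k = x k + r * h"
  shows "y < x0 \<or> x N \<le> y \<or> (\<exists>k<N. x k \<le> y \<and> y < xb k) \<or> (\<exists>k<N. xb k \<le> y \<and> y < x (Suc k))"
proof (cases "y < x0 \<or> x N \<le> y")
  case True then show ?thesis by blast
next
  case False
  define k where "k = nat \<lfloor>(y - x0) / h\<rfloor>"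
  have s0: "(y - x0) / h \<ge> 0" using False hh by simp
  have sN: "(y - x0) / h < real N" using False hh xdef[of N] by (simp add: field_simps)
  have kf: "real k = of_int \<lfloor>(y - x0) / h\<rfloor>" using s0 unfolding k_def by simp
  have "real k \<le> (y - x0) / h" "(y - x0) / h < real k + 1" using kf by linarith+
  then have a: "x k \<le> y" "y < x (Suc k)" using hh xdef[of k] xdef[of "Suc k"] by (auto simp: field_simps)
  have "real k < real N" using \<open>real k \<le> (y - x0) / h\<close> sN by linarith
  then have kN: "k < N" by simp
  show ?thesis using a kN by (cases "y < xb k") auto
qed

lemma cover_left:
  fixes x xb :: "nat \<Rightarrow> real"
  assumes hh: "h > 0" and hr: "0 < r" "r \<le> 1" and hN: "N \<ge> 1"
    and xdef: "\<And>k. x k = x0 + real k * h" and xbdef: "\<And>k. xb k = x k + r * h"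
  shows "y \<le> x0 \<or> x N < y \<or> (\<exists>k<N. x k < y \<and> y \<le> xb k) \<or> (\<exists>k<N. xb k < y \<and> y \<le> x (Suc k))"
proof (cases "y \<le> x0 \<or> x N < y")
  case True then show ?thesis by blast
next
  case False
  define c where "c = \<lceil>(y - x0) / h\<rceil>"
  define k where "k = nat c - 1"
  have s0: "(y - x0) / h > 0" using False hh by simp
  have sN: "(y - x0) / h \<le> real N" using False hh xdef[of N] by (simp add: field_simps)
  have c1: "c \<ge> 1" unfolding c_def using s0 by (simp add: one_le_ceiling zero_less_ceiling)
  have kf: "real k = of_int c - 1" unfolding k_def using c1 by (simp add: of_nat_diff)
  have "of_int c - 1 < (y - x0) / h" "(y - x0) / h \<le> of_int c" unfolding c_def by linarith+
  then have "real k < (y - x0) / h" "(y - x0) / h \<le> real k + 1" using kf by linarith+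
  then have a: "x k < y" "y \<le> x (Suc k)" using hh xdef[of k] xdef[of "Suc k"] by (auto simp: field_simps)
  have "real k < real N" using \<open>real k < (y - x0) / h\<close> sN by linarith
  then have kN: "k < N" by simp
  show ?thesis using a kN by (cases "y \<le> xb k") auto
qed

lemma pw_deriv:
  fixes x xb :: "nat \<Rightarrow> real" and A B A' B' :: "nat \<Rightarrow> real \<Rightarrow> real" and F D :: "real \<Rightarrow> real"
  assumes hh: "h > 0" and hr: "0 < r" "r \<le> 1" and hN: "N \<ge> 1"
    and xdef: "\<And>k. x k = x0 + real k * h" and xbdef: "\<And>k. xb k = x k + r * h"
    and F1: "\<forall>y. y \<le> x0 \<longrightarrow> F y = A 0 y"
    and F2: "\<forall>y. x N \<le> y \<longrightarrow> F y = A N y"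
    and F3: "\<forall>k<N. \<forall>y\<in>{x k..xb k}. F y = A k y"
    and F4: "\<forall>k<N. \<forall>y\<in>{xb k..x (Suc k)}. F y = B (Suc k) y"
    and D1: "\<forall>y. y \<le> x0 \<longrightarrow> D y = A' 0 y"
    and D2: "\<forall>y. x N \<le> y \<longrightarrow> D y = A' N y"
    and D3: "\<forall>k<N. \<forall>y\<in>{x k..xb k}. D y = A' k y"
    and D4: "\<forall>k<N. \<forall>y\<in>{xb k..x (Suc k)}. D y = B' (Suc k) y"
    and dA: "\<And>k y. (A k has_real_derivative A' k y) (at y)"
    and dB: "\<And>k y. (B k has_real_derivative B' k y) (at y)"
  shows "(F has_real_derivative D y) (at y)"
proof (rule deriv_glue)
  show "(F has_real_derivative D y) (at y within {y..})"
    using cover_right[OF hh hr hN xdef xbdef, of y]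
  proof (elim disjE exE conjE)
    assume "y < x0"
    then show ?thesis using right_piece[of y y x0 F "A 0" "A' 0 y"] F1 D1 dA by auto
  next
    assume "x N \<le> y"
    then show ?thesis using right_piece[of y y "y+1" F "A N" "A' N y"] F2 D2 dA by auto
  next
    fix k assume "k < N" "x k \<le> y" "y < xb k"
    then show ?thesis using right_piece[of "x k" y "xb k" F "A k" "A' k y"] F3 D3 dA by auto
  next
    fix k assume "k < N" "xb k \<le> y" "y < x (Suc k)"
    then show ?thesis using right_piece[of "xb k" y "x (Suc k)" F "B (Suc k)" "B' (Suc k) y"] F4 D4 dB by auto
  qed
  show "(F has_real_derivative D y) (at y within {..y})"
    using cover_left[OF hh hr hN xdef xbdef, of y]
  proof (elim disjE exE conjE)
    assume "y \<le> x0"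
    then show ?thesis using left_piece[of "y-1" y y F "A 0" "A' 0 y"] F1 D1 dA by auto
  next
    assume "x N < y"
    then show ?thesis using left_piece[of "x N" y y F "A N" "A' N y"] F2 D2 dA by auto
  next
    fix k assume "k < N" "x k < y" "y \<le> xb k"
    then show ?thesis using left_piece[of "x k" y "xb k" F "A k" "A' k y"] F3 D3 dA by auto
  next
    fix k assume "k < N" "xb k < y" "y \<le> x (Suc k)"
    then show ?thesis using left_piece[of "xb k" y "x (Suc k)" F "B (Suc k)" "B' (Suc k) y"] F4 D4 dB by auto
  qed
qed

lemma pw_mono:
  fixes x xb :: "nat \<Rightarrow> real" and P R :: "nat \<Rightarrow> real \<Rightarrow> real" and G :: "real \<Rightarrow> real"
  assumes hh: "h > 0" and hr: "0 < r" "r \<le> 1" and hN: "N \<ge> 1"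
    and xdef: "\<And>k. x k = x0 + real k * h" and xbdef: "\<And>k. xb k = x k + r * h"
    and G1: "\<forall>y. y \<le> x0 \<longrightarrow> G y = P 0 y"
    and G2: "\<forall>y. x N \<le> y \<longrightarrow> G y = P N y"
    and G3: "\<forall>k<N. \<forall>y\<in>{x k..xb k}. G y = P k y"
    and G4: "\<forall>k<N. \<forall>y\<in>{xb k..x (Suc k)}. G y = R (Suc k) y"
    and mP: "\<And>k. mono (P k)" and mR: "\<And>k. mono (R k)"
  shows "mono G"
proof -
  have hrh: "r * h \<le> h" using mult_right_mono[of r 1 h] hr hh by simp
  have x0: "x 0 = x0" using xdef[of 0] by simp
  have ms: "mono_on S G" if "\<forall>y\<in>S. G y = Q y" "mono Q" for S Q
    using that unfolding mono_on_def mono_def by auto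
  have m1: "mono_on {..x0} G" by (rule ms[of _ "P 0"]) (use G1 mP in auto)
  have m2: "mono_on {x N..} G" by (rule ms[of _ "P N"]) (use G2 mP in auto)
  have m3: "mono_on {x k..xb k} G" if "k < N" for k by (rule ms[of _ "P k"]) (use G3 mP that in auto)
  have m4: "mono_on {xb k..x (Suc k)} G" if "k < N" for k by (rule ms[of _ "R (Suc k)"]) (use G4 mR that in auto)
  have ind: "n \<le> N \<Longrightarrow> mono_on {x0..x n} G" for n
  proof (induction n)
    case 0 then show ?case using x0 by (auto simp: mono_on_def)
  next
    case (Suc n)
    then have nN: "n < N" by simp
    have o1: "x n \<le> xb n" "xb n \<le> x (Suc n)" "x0 \<le> x n"
      using xbdef[of n] xdef[of n] xdef[of "Suc n"] hr hh hrh by (auto simp: algebra_simps)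
    have a: "mono_on ({x0..x n} \<union> {x n..xb n}) G"
      by (rule mono_glue[where m="x n"]) (use Suc nN m3 o1 in auto)
    have b: "mono_on (({x0..x n} \<union> {x n..xb n}) \<union> {xb n..x (Suc n)}) G"
      by (rule mono_glue[where m="xb n"]) (use a m4 nN o1 in auto)
    have "({x0..x n} \<union> {x n..xb n}) \<union> {xb n..x (Suc n)} = {x0..x (Suc n)}"
      using o1 by auto
    then show ?case using b by simp
  qed
  have xN: "x0 \<le> x N" using xdef[of N] hh by simp
  have c: "mono_on ({..x0} \<union> {x0..x N}) G"
    by (rule mono_glue[where m=x0]) (use m1 ind[of N] xN in auto)
  have d: "mono_on (({..x0} \<union> {x0..x N}) \<union> {x N..}) G"
    by (rule mono_glue[where m="x N"]) (use c m2 xN in auto)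
  have "({..x0} \<union> {x0..x N}) \<union> {x N..} = UNIV" using xN by auto
  then show ?thesis using d by (simp add: mono_on_def mono_def)
qed

lemma keyalg:
  fixes L1 L2 \<mu>1 r h d g20 f20 kr Nr x0 :: real
  assumes "2*d = h^2*(L2 + L2*r + \<mu>1*(1-r))" "r*(L1-\<mu>1) = L2-\<mu>1"
  shows "1/2*L1*(x0 + kr*h + r*h - (x0 + kr*h))^2 + (g20 + (kr-1)*L2*h)*(x0 + kr*h + r*h - (x0 + kr*h))
     + (1/2*L2*(x0 + kr*h - x0)^2 + g20*(x0 + kr*h - x0) + f20 + (Nr - kr)*d)
   = 1/2*\<mu>1*(x0 + kr*h + r*h - (x0 + (kr+1)*h))^2 + (g20 + (kr+1-1)*L2*h)*(x0 + kr*h + r*h - (x0 + (kr+1)*h))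
     + (1/2*L2*(x0 + (kr+1)*h - x0)^2 + g20*(x0 + (kr+1)*h - x0) + f20 + (Nr - (kr+1))*d)"
  using assms by algebra
lemma cvx1:
  fixes f f' :: "real \<Rightarrow> real"
  assumes "\<And>y. (f has_real_derivative f' y) (at y)" "mono (\<lambda>y. f' y - c*y)"
  shows "convex_on UNIV (\<lambda>y. f y - c/2*y\<^sup>2)"
proof (rule convex_on_realI[where f'="\<lambda>y. f' y - c*y"])
  fix y :: real
  show "((\<lambda>y. f y - c/2*y\<^sup>2) has_real_derivative f' y - c*y) (at y)"
    using assms(1)[of y] by (auto intro!: derivative_eq_intros)
next
  fix a b :: real assume "a \<le> b" then show "f' a - c*a \<le> f' b - c*b" using assms(2) by (auto simp: mono_def)
qed simp

lemma cvx2: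
  fixes f f' :: "real \<Rightarrow> real"
  assumes "\<And>y. (f has_real_derivative f' y) (at y)" "mono (\<lambda>y. c*y - f' y)"
  shows "convex_on UNIV (\<lambda>y. c/2*y\<^sup>2 - f y)"
proof (rule convex_on_realI[where f'="\<lambda>y. c*y - f' y"])
  fix y :: real
  show "((\<lambda>y. c/2*y\<^sup>2 - f y) has_real_derivative c*y - f' y) (at y)"
    using assms(1)[of y] by (auto intro!: derivative_eq_intros)
next
  fix a b :: real assume "a \<le> b" then show "c*a - f' a \<le> c*b - f' b" using assms(2) by (auto simp: mono_def)
qed simp

lemma lsc_of_deriv:
  fixes f f' :: "real \<Rightarrow> real"
  assumes "\<And>y. (f has_real_derivative f' y) (at y)"
  shows "lsc_real f"
proof -
  have "continuous_on UNIV f"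
    by (rule continuous_at_imp_continuous_on) (use assms DERIV_isCont in blast)
  then show ?thesis unfolding lsc_real_def
    by (auto intro!: closed_Collect_le continuous_on_const)
qed

lemma mono_lin:
  fixes a b :: real assumes "a \<ge> 0" shows "mono (\<lambda>y. a*y + b)"
  using assms by (auto simp: mono_def mult_left_mono)

theorem proposition5:
  fixes f10 f20 g20 x0 \<mu>1 L1 \<mu>2 L2 \<Delta> U :: real and N :: nat
    and x g1 f1k xbar :: "nat \<Rightarrow> real" and f1 f2 :: "real \<Rightarrow> real"
  assumes hDelta: "f10 - f20 > 0"
    and hN: "N \<ge> 1"
    and hmu1: "0 \<le> \<mu>1" and h12: "\<mu>1 < L2" and h21: "L2 \<le> L1"
    and hmu2a: "\<mu>2 < L2" and hmu2b: "\<mu>2 < L1"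
    and hcase: "\<mu>2 \<ge> 0 \<or>
      (\<mu>1 > - \<mu>2 \<and> - \<mu>2 > 0 \<and>
       (L2 + \<mu>2) / (L1 * L2) * ((L2 - L1) / (- \<mu>2)) + inverse \<mu>1 - inverse L1 \<le> 0)"
    and Delta_def: "\<Delta> = f10 - f20"
    and U_def: "U = - sqrt (2 * \<Delta> / (p1_const \<mu>1 L1 L2 * real N))"
    and x_def: "x = (\<lambda>k::nat. x0 - real k * U / L2)"
    and g1_def: "g1 = (\<lambda>k::nat. g20 - (real k - 1) * U)"
    and f2_def: "f2 = (\<lambda>y::real. 1/2 * L2 * (y - x0)\<^sup>2 + g20 * (y - x0) + f20)"
    and f1k_def: "f1k = (\<lambda>k::nat. f2 (x k) + (real N - real k) / real N * \<Delta>)"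
    and xbar_def: "xbar = (\<lambda>k::nat. x k - (L2 - \<mu>1) / (L1 - \<mu>1) * U / L2)"
    and f1_def: "f1 = (\<lambda>y::real.
           if y \<le> x0 then 1/2 * L1 * (y - x0)\<^sup>2 + g1 0 * (y - x0) + f1k 0
           else if x N \<le> y then 1/2 * L1 * (y - x N)\<^sup>2 + g1 N * (y - x N) + f1k N
           else (let k = nat \<lfloor>(y - x0) / (- U / L2)\<rfloor> in
                 if y \<le> xbar k then 1/2 * L1 * (y - x k)\<^sup>2 + g1 k * (y - x k) + f1k k
                 else 1/2 * \<mu>1 * (y - x (Suc k))\<^sup>2 + g1 (Suc k) * (y - x (Suc k))
                      + f1k (Suc k)))"
  shows "FmuL \<mu>1 L1 f1 \<and> FmuL \<mu>2 L2 f2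
    \<and> (\<forall>k<N. dca_step f1 f2 (x k) (x (Suc k)))
    \<and> 1/2 * Min ((\<lambda>k. (deriv f1 (x k) - deriv f2 (x k))\<^sup>2) ` {0..N})
        = \<Delta> / (p1_const \<mu>1 L1 L2 * real N)"
proof -
  have L2p: "L2 > 0" using hmu1 h12 by linarith
  have L1p: "L1 > 0" using L2p h21 by linarith
  have Lm: "L1 - \<mu>1 > 0" using h12 h21 by linarith
  define r where "r = (L2 - \<mu>1) / (L1 - \<mu>1)"
  have r0: "0 < r" using h12 Lm unfolding r_def by simp
  have r1: "r \<le> 1" using h21 Lm unfolding r_def by simp
  have rr: "r * (L1 - \<mu>1) = L2 - \<mu>1" unfolding r_def using Lm by simp
  define p where "p = p1_const \<mu>1 L1 L2"
  have pL: "p * L2\<^sup>2 = L2 + L2*r + \<mu>1*(1-r)"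
  proof (cases "\<mu>1 = 0")
    case True
    then show ?thesis unfolding p_def p1_const_def r_def using L2p L1p
      by (simp add: field_simps power2_eq_square)
  next
    case False
    then have m: "\<mu>1 > 0" using hmu1 by simp
    have e1: "inverse L2 - inverse L1 = (L1 - L2) / (L1 * L2)" using L2p L1p by (simp add: field_simps)
    have e2: "inverse \<mu>1 - inverse L1 = (L1 - \<mu>1) / (\<mu>1 * L1)" using m L1p by (simp add: field_simps)
    have e3: "1 - r = (L1 - L2) / (L1 - \<mu>1)" unfolding r_def using Lm by (simp add: field_simps)
    have q: "(inverse L2 - inverse L1) / (inverse \<mu>1 - inverse L1) = \<mu>1 * (1 - r) / L2"
      unfolding e1 e2 e3 using m L1p L2p Lm by (simp add: field_simps)
    have "p = inverse L2 * r + inverse L2 * (1 + \<mu>1 * (1 - r) / L2)"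
      unfolding p_def p1_const_def using False q by (simp add: r_def)
    then show ?thesis using L2p by (simp add: field_simps power2_eq_square)
  qed
  have pp: "p > 0"
  proof -
    have "L2 + L2*r + \<mu>1*(1-r) > 0" using L2p r0 r1 hmu1 by (smt (verit) mult_nonneg_nonneg mult_pos_pos)
    then have "p * L2\<^sup>2 > 0" using pL by simp
    then show ?thesis using L2p by (simp add: zero_less_mult_iff)
  qed
  have Dp: "\<Delta> > 0" using hDelta Delta_def by simp
  have Np: "real N > 0" using hN by simp
  have arg: "2 * \<Delta> / (p * real N) > 0" using Dp Np pp by simp
  have U2: "U\<^sup>2 = 2 * \<Delta> / (p * real N)" unfolding U_def p_def[symmetric] using arg by simp
  have Uneg: "U < 0" unfolding U_def p_def[symmetric] using arg by simp
  define h where "h = - U / L2"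
  have hh: "h > 0" unfolding h_def using Uneg L2p by (simp add: divide_neg_pos)
  have Uh: "U = - L2 * h" unfolding h_def using L2p by simp
  define d where "d = \<Delta> / real N"
  have dd: "2*d = h^2*(L2 + L2*r + \<mu>1*(1-r))"
  proof -
    have "2*d = U\<^sup>2 * p" unfolding d_def U2 using pp Np by (simp add: field_simps)
    also have "\<dots> = h^2 * (p * L2\<^sup>2)" unfolding Uh by (simp add: power2_eq_square)
    finally show ?thesis unfolding pL .
  qed
  have xdef: "\<And>k. x k = x0 + real k * h" unfolding x_def h_def by simp
  define xb where "xb = xbar"
  have xbdef: "\<And>k. xb k = x k + r * h" unfolding xb_def xbar_def r_def h_def by simp
  have g1e: "\<And>k. g1 k = g20 + (real k - 1) * L2 * h" unfolding g1_def Uh by simp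
  have f2e: "\<And>y. f2 y = 1/2 * L2 * (y - x0)\<^sup>2 + g20 * (y - x0) + f20" unfolding f2_def by simp
  have f1ke: "\<And>k. f1k k = 1/2*L2*(x0 + real k*h - x0)^2 + g20*(x0 + real k*h - x0) + f20 + (real N - real k)*d"
    unfolding f1k_def f2e xdef d_def by simp
  define QL where "QL = (\<lambda>k y. 1/2*L1*(y - x k)\<^sup>2 + g1 k*(y - x k) + f1k k)"
  define Qm where "Qm = (\<lambda>k y. 1/2*\<mu>1*(y - x k)\<^sup>2 + g1 k*(y - x k) + f1k k)"
  define QL' where "QL' = (\<lambda>k y. L1*(y - x k) + g1 k)"
  define Qm' where "Qm' = (\<lambda>k y. \<mu>1*(y - x k) + g1 k)"
  define D where "D = (\<lambda>y. if y \<le> x0 then QL' 0 y else if x N \<le> y then QL' N y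
          else (let k = nat \<lfloor>(y - x0) / h\<rfloor> in if y \<le> xb k then QL' k y else Qm' (Suc k) y))"
  have f1e: "f1 = (\<lambda>y. if y \<le> x0 then QL 0 y else if x N \<le> y then QL N y
          else (let k = nat \<lfloor>(y - x0) / h\<rfloor> in if y \<le> xb k then QL k y else Qm (Suc k) y))"
    unfolding f1_def QL_def Qm_def h_def xb_def by (rule ext) (simp add: x_def)
  have mA: "\<And>k. QL k (x k) = Qm k (x k)" unfolding QL_def Qm_def by simp
  have mA': "\<And>k. QL' k (x k) = Qm' k (x k)" unfolding QL'_def Qm'_def by simp
  have mB: "QL k (xb k) = Qm (Suc k) (xb k)" for k
  proof -
    have "x (Suc k) = x0 + (real k + 1) * h" using xdef[of "Suc k"] by simp
    moreover have "g1 (Suc k) = g20 + (real k + 1 - 1) * L2 * h" using g1e[of "Suc k"] by simp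
    moreover have "f1k (Suc k) = 1/2*L2*(x0 + (real k + 1)*h - x0)^2 + g20*(x0 + (real k + 1)*h - x0) + f20 + (real N - (real k + 1))*d"
      using f1ke[of "Suc k"] by (simp add: add.commute)
    ultimately show ?thesis unfolding QL_def Qm_def xbdef xdef[of k] g1e[of k] f1ke[of k]
      using keyalg[OF dd rr, of x0 "real k" g20 f20 "real N"] by simp
  qed
  have mB': "QL' k (xb k) = Qm' (Suc k) (xb k)" for k
  proof -
    have "L1 * (r * h) = \<mu>1 * (r * h - h) + L2 * h"
    proof -
      have "(r*(L1-\<mu>1))*h = (L2-\<mu>1)*h" using rr by simp
      then show ?thesis by (simp add: algebra_simps)
    qed
    then show ?thesis unfolding QL'_def Qm'_def xbdef xdef g1e by (simp add: algebra_simps)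
  qed
  note PF = pw_pieces[OF hh r0 r1 hN xdef xbdef mA mB f1e]
  note PD = pw_pieces[OF hh r0 r1 hN xdef xbdef mA' mB' D_def]
  have dA: "\<And>k y. (QL k has_real_derivative QL' k y) (at y)" unfolding QL_def QL'_def by (rule quadD)
  have dB: "\<And>k y. (Qm k has_real_derivative Qm' k y) (at y)" unfolding Qm_def Qm'_def by (rule quadD)
  have f1D: "\<And>y. (f1 has_real_derivative D y) (at y)"
    by (rule pw_deriv[OF hh r0 r1 hN xdef xbdef PF PD dA dB])
  have f2D: "\<And>y. (f2 has_real_derivative (L2*(y - x0) + g20)) (at y)"
    unfolding f2_def by (rule quadD)
  have monoD: "mono D"
    by (rule pw_mono[OF hh r0 r1 hN xdef xbdef PD])
       (auto simp: QL'_def Qm'_def mono_def L1p hmu1 mult_left_mono)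
  have monoF: "mono (\<lambda>y. D y - \<mu>1 * y)"
  proof (rule pw_mono[OF hh r0 r1 hN xdef xbdef, where P="\<lambda>k y. QL' k y - \<mu>1 * y" and R="\<lambda>k y. Qm' k y - \<mu>1 * y"])
    show "mono (\<lambda>y. QL' k y - \<mu>1 * y)" for k
      using mono_lin[of "L1 - \<mu>1" "g1 k - L1 * x k"] Lm unfolding QL'_def by (simp add: algebra_simps)
    show "mono (\<lambda>y. Qm' k y - \<mu>1 * y)" for k
      unfolding Qm'_def by (simp add: algebra_simps mono_def)
  qed (use PD in auto)
  have monoG: "mono (\<lambda>y. L1 * y - D y)"
  proof (rule pw_mono[OF hh r0 r1 hN xdef xbdef, where P="\<lambda>k y. L1 * y - QL' k y" and R="\<lambda>k y. L1 * y - Qm' k y"])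
    show "mono (\<lambda>y. L1 * y - Qm' k y)" for k
      using mono_lin[of "L1 - \<mu>1" "L1 * 0 + \<mu>1 * x k - g1 k"] Lm unfolding Qm'_def by (simp add: algebra_simps)
    show "mono (\<lambda>y. L1 * y - QL' k y)" for k
      unfolding QL'_def by (simp add: algebra_simps mono_def)
  qed (use PD in auto)
  have C1: "FmuL \<mu>1 L1 f1"
    unfolding FmuL_def using lsc_of_deriv[OF f1D] cvx1[OF f1D monoF] cvx2[OF f1D monoG] by simp
  have C2: "FmuL \<mu>2 L2 f2"
  proof -
    have m1: "mono (\<lambda>y. (L2*(y - x0) + g20) - \<mu>2 * y)"
      using mono_lin[of "L2 - \<mu>2" "g20 - L2 * x0"] hmu2a by (simp add: algebra_simps)
    have m2: "mono (\<lambda>y. L2 * y - (L2*(y - x0) + g20))"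
      by (simp add: algebra_simps mono_def)
    show ?thesis
      unfolding FmuL_def using lsc_of_deriv[OF f2D] cvx1[OF f2D m1] cvx2[OF f2D m2] by simp
  qed
  have Dx: "D (x j) = g1 j" if "j \<le> N" for j
  proof (cases "j = N")
    case True then show ?thesis using PD(2) unfolding QL'_def by simp
  next
    case False
    then have "j < N" using that by simp
    moreover have "x j \<le> xb j" using xbdef[of j] r0 hh by simp
    ultimately show ?thesis using PD(3) unfolding QL'_def by auto
  qed
  have g2x: "L2*(x k - x0) + g20 = g1 (Suc k)" for k
    unfolding xdef g1e by (simp add: algebra_simps)
  have C3: "\<forall>k<N. dca_step f1 f2 (x k) (x (Suc k))"
  proof (intro allI impI)
    fix k assume k: "k < N"
    define g where "g = g1 (Suc k)"
    have cv: "convex_on UNIV (\<lambda>w. f1 w - g * w)"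
    proof (rule convex_on_realI[where f'="\<lambda>w. D w - g"])
      fix y :: real
      show "((\<lambda>w. f1 w - g * w) has_real_derivative D y - g) (at y)"
        using f1D[of y] by (auto intro!: derivative_eq_intros)
    next
      fix a b :: real assume "a \<le> b" then show "D a - g \<le> D b - g" using monoD by (auto simp: mono_def)
    qed simp
    have dz: "((\<lambda>w. f1 w - g * w) has_real_derivative 0) (at (x (Suc k)) within UNIV)"
      using f1D[of "x (Suc k)"] Dx[of "Suc k"] k unfolding g_def
      by (auto intro!: derivative_eq_intros)
    have "\<forall>w. f1 (x (Suc k)) - g * x (Suc k) \<le> f1 w - g * w"
    proof
      fix w
      show "f1 (x (Suc k)) - g * x (Suc k) \<le> f1 w - g * w"
        using convex_on_imp_above_tangent[OF cv connected_UNIV _ _ dz, of w] by simp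
    qed
    then show "dca_step f1 f2 (x k) (x (Suc k))"
      unfolding dca_step_def using f2D[of "x k"] g2x[of k] unfolding g_def by auto
  qed
  have img: "(\<lambda>k. (deriv f1 (x k) - deriv f2 (x k))\<^sup>2) ` {0..N} = {U\<^sup>2}"
  proof -
    have "(deriv f1 (x k) - deriv f2 (x k))\<^sup>2 = U\<^sup>2" if "k \<in> {0..N}" for k
    proof -
      have "deriv f1 (x k) = g1 k" using DERIV_imp_deriv[OF f1D] Dx that by simp
      moreover have "deriv f2 (x k) = g1 (Suc k)" using DERIV_imp_deriv[OF f2D] g2x by simp
      moreover have "g1 k - g1 (Suc k) = U" unfolding g1e Uh by (simp add: algebra_simps)
      ultimately show ?thesis by simp
    qed
    then show ?thesis by force
  qed
  have C4: "1/2 * Min ((\<lambda>k. (deriv f1 (x k) - deriv f2 (x k))\<^sup>2) ` {0..N})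
        = \<Delta> / (p1_const \<mu>1 L1 L2 * real N)"
    unfolding img p_def[symmetric] using U2 by simp
  show ?thesis using C1 C2 C3 C4 by blast
qed

end
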